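(* Let $K\subset\mathbb{R}^n$ be a proper cone and let $\mathcal{S}=\bigcup_{t}\mathcal{S}_t\subset\pi(K)$ be a $K$-irreducible semigroup generated in one of the three ways (discrete, continuous, or switched with jumps) described in the context. If $\rho(\mathcal{S})=1$, then $\mathcal{S}$ is bounded as a subset of $\mathbb{R}^{n\times n}$.
   Context: A proper cone $K\subset\mathbb{R}^n$ is a nonempty set with $rK\subset K$ for all $r>0$ which is convex, pointed, closed and has nonempty interior. Write $x\ge_K y$ if $x-y\in K$. A face of $K$ is a cone $F\subseteq K$ with: $x\in F$, $x\ge_K y\ge_K0$ imply $y\in F$; $\{0\},K$ are trivial faces. $\pi(K)=\{A: AK\subset K\}$; $A\in\pi(K)$ is $K$-irreducible if no nontrivial face $F$ has $AF\subset F$. Semigroups: (A) discrete: for compact $\mathcal{M}\subset\mathbb{R}^{n\times n}$, $\mathcal{S}_0=\{I\}$, $\mathcal{S}_t=\{A_{t-1}\cdots A_0:A_s\in\mathcal{M}\}$, $t\in\mathbb{N}$. (B) continuous: for compact $\mathcal{M}$, $\mathcal{S}_0=\{I\}$, $\mathcal{S}_t=\{\Phi_\sigma(t)\}$ over measurable $\sigma:[0,t]\to\mathcal{M}$, where $\dot\Phi_\sigma=\sigma\Phi_\sigma$, $\Phi_\sigma(0)=I$. (C) with jumps: for compact $\mathcal{M}\subset\mathbb{R}^{n\times n}\times\mathbb{R}^{n\times n}$ of pairs $(A,\Pi)$ with $\Pi^2=\Pi$, $A\Pi=\Pi A$, and piecewise constant right-continuous $\sigma:\mathbb{R}_+\to\mathcal{M}$,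 $\sigma(s)=(A_{\sigma(s)},\Pi_{\sigma(s)})$, with switching times $0=t_0<t_1<\dots$, $t_k\to\infty$, for $t\in[t_k,t_{k+1})$ set $\Phi_\sigma(t)=e^{A_{\sigma(t_k)}(t-t_k)}\Pi_{\sigma(t_k)}e^{A_{\sigma(t_{k-1})}(t_k-t_{k-1})}\Pi_{\sigma(t_{k-1})}\cdots e^{A_{\sigma(t_0)}(t_1-t_0)}\Pi_{\sigma(t_0)}$, and $\mathcal{S}_t$ is the set of all such $\Phi_\sigma(t)$. In each case $\mathcal{S}=\bigcup_t\mathcal{S}_t$. Joint spectral radius: $\rho(\mathcal{S})=\lim_{t\to\infty}\sup\{\|S\|:S\in\mathcal{S}_t\}^{1/t}$. The semigroup $\mathcal{S}\subset\pi(K)$ is $K$-irreducible if there exists $t>0$ such that $\operatorname{conv}\mathcal{S}_t$ contains a $K$-irreducible element. *)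

theory Defs
  imports "HOL-Analysis.Analysis"
begin

definition is_cone :: "(real^'n) set \<Rightarrow> bool" where
  "is_cone C \<longleftrightarrow> C \<noteq> {} \<and> (\<forall>r>0. \<forall>x\<in>C. r *\<^sub>R x \<in> C)"

definition proper_cone :: "(real^'n) set \<Rightarrow> bool" where
  "proper_cone K \<longleftrightarrow> is_cone K \<and> convex K \<and> (\<forall>x. x \<in> K \<and> - x \<in> K \<longrightarrow> x = 0)
     \<and> closed K \<and> interior K \<noteq> {}"

definition cone_ge :: "(real^'n) set \<Rightarrow> real^'n \<Rightarrow> real^'n \<Rightarrow> bool" where
  "cone_ge K x y \<longleftrightarrow> x - y \<in> K"

definition is_face :: "(real^'n) set \<Rightarrow> (real^'n) set \<Rightarrow> bool" where
  "is_face K F \<longleftrightarrow> is_cone F \<and> convex F \<and> F \<subseteq> K \<and>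
     (\<forall>x y. x \<in> F \<and> cone_ge K x y \<and> cone_ge K y 0 \<longrightarrow> y \<in> F)"

definition pi_cone :: "(real^'n) set \<Rightarrow> (real^'n^'n) set" where
  "pi_cone K = {A. \<forall>x\<in>K. A *v x \<in> K}"

definition K_irreducible :: "(real^'n) set \<Rightarrow> real^'n^'n \<Rightarrow> bool" where
  "K_irreducible K A \<longleftrightarrow> A \<in> pi_cone K \<and>
     \<not> (\<exists>F. is_face K F \<and> F \<noteq> {0} \<and> F \<noteq> K \<and> (\<forall>x\<in>F. A *v x \<in> F))"

primrec matpow :: "real^'n^'n \<Rightarrow> nat \<Rightarrow> real^'n^'n" where
  "matpow A 0 = mat 1"
| "matpow A (Suc k) = A ** matpow A k"

definition mexp :: "real^'n^'n \<Rightarrow> real^'n^'n" where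
  "mexp A = (\<Sum>k. (1 / fact k) *\<^sub>R matpow A k)"

primrec disc_sg :: "(real^'n^'n) set \<Rightarrow> nat \<Rightarrow> (real^'n^'n) set" where
  "disc_sg M 0 = {mat 1}"
| "disc_sg M (Suc t) = {A ** B | A B. A \<in> M \<and> B \<in> disc_sg M t}"

text \<open>(B) continuous: Phi is the (Caratheodory) solution of Phi' = sigma Phi, Phi(0) = I,
  written in integral form, for measurable sigma : [0,t] \<rightarrow> M.\<close>
definition cont_sg :: "(real^'n^'n) set \<Rightarrow> real \<Rightarrow> (real^'n^'n) set" where
  "cont_sg M t = {\<Phi> t | \<sigma> \<Phi>.
      \<sigma> \<in> borel_measurable (lebesgue_on {0..t}) \<and> (\<forall>s\<in>{0..t}. \<sigma> s \<in> M) \<and>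
      continuous_on {0..t} \<Phi> \<and>
      (\<forall>s\<in>{0..t}. ((\<lambda>r. \<sigma> r ** \<Phi> r) has_integral (\<Phi> s - mat 1)) {0..s})}"

text \<open>For t in [t_k, t_(k+1)), Phi_sigma(t) only depends on the modes
  m_0,...,m_k and the switching times 0 = t_0 < ... < t_k \<le> t. The list ms gives the modes
  (m_0 first), ts the switching times (t_0 first).\<close>
fun jump_prod :: "((real^'n^'n) \<times> (real^'n^'n)) list \<Rightarrow> real list \<Rightarrow> real \<Rightarrow> real^'n^'n" where
  "jump_prod [] _ _ = mat 1"
| "jump_prod _ [] _ = mat 1"
| "jump_prod ((A,P) # ms) (t0 # ts) t =
     (let t1 = (case ts of [] \<Rightarrow> t | (s # _) \<Rightarrow> s)
      in jump_prod ms ts t ** (mexp ((t1 - t0) *\<^sub>R A) ** P))"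

definition jump_sg :: "((real^'n^'n) \<times> (real^'n^'n)) set \<Rightarrow> real \<Rightarrow> (real^'n^'n) set" where
  "jump_sg M t = {jump_prod ms ts t | ms ts.
      ms \<noteq> [] \<and> length ts = length ms \<and> set ms \<subseteq> M \<and>
      hd ts = 0 \<and> sorted_wrt (<) ts \<and> last ts \<le> t}"

definition jump_modes :: "((real^'n^'n) \<times> (real^'n^'n)) set \<Rightarrow> bool" where
  "jump_modes M \<longleftrightarrow> compact M \<and> (\<forall>(A,P)\<in>M. P ** P = P \<and> A ** P = P ** A)"

definition jsr_disc_is :: "(nat \<Rightarrow> (real^'n^'n) set) \<Rightarrow> real \<Rightarrow> bool" where
  "jsr_disc_is St r \<longleftrightarrow> (\<forall>\<^sub>F t in sequentially. bounded (St t)) \<and>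
     ((\<lambda>t. (SUP S\<in>St t. norm S) powr (1 / real t)) \<longlongrightarrow> r) sequentially"

definition jsr_cont_is :: "(real \<Rightarrow> (real^'n^'n) set) \<Rightarrow> real \<Rightarrow> bool" where
  "jsr_cont_is St r \<longleftrightarrow> (\<forall>\<^sub>F t in at_top. bounded (St t)) \<and>
     ((\<lambda>t. (SUP S\<in>St t. norm S) powr (1 / t)) \<longlongrightarrow> r) at_top"

definition irred_disc :: "(real^'n) set \<Rightarrow> (nat \<Rightarrow> (real^'n^'n) set) \<Rightarrow> bool" where
  "irred_disc K St \<longleftrightarrow> (\<exists>t>0. \<exists>A\<in>convex hull (St t). K_irreducible K A)"

definition irred_cont :: "(real^'n) set \<Rightarrow> (real \<Rightarrow> (real^'n^'n) set) \<Rightarrow> bool" where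
  "irred_cont K St \<longleftrightarrow> (\<exists>t>0. \<exists>A\<in>convex hull (St t). K_irreducible K A)"

end

theory Submission
  imports Defs
begin

lemma norm_sq_mat: "(norm (A::real^'n^'m))^2 = (\<Sum>i\<in>UNIV. \<Sum>j\<in>UNIV. (A$i$j)^2)"
  unfolding power2_norm_eq_inner inner_vec_def inner_real_def by (simp add: power2_eq_square)

lemma norm_mat_mult_le: "norm ((A::real^'n^'m) ** (B::real^'p^'n)) \<le> norm A * norm B"
proof -
  have sw: "(\<Sum>j\<in>UNIV. \<Sum>k\<in>UNIV. (B$k$j)^2) = (\<Sum>k\<in>UNIV. \<Sum>j\<in>UNIV. (B$k$j)^2)"
    by (rule sum.swap)
  have "(norm (A ** B))^2 = (\<Sum>i\<in>UNIV. \<Sum>j\<in>UNIV. ((A**B)$i$j)^2)" by (rule norm_sq_mat)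
  also have "\<dots> \<le> (\<Sum>i\<in>UNIV. \<Sum>j\<in>UNIV. (\<Sum>k\<in>UNIV. (A$i$k)^2) * (\<Sum>k\<in>UNIV. (B$k$j)^2))"
    unfolding matrix_matrix_mult_def
    by (intro sum_mono) (simp add: Cauchy_Schwarz_ineq_sum)
  also have "\<dots> = (\<Sum>i\<in>UNIV. \<Sum>k\<in>UNIV. (A$i$k)^2) * (\<Sum>j\<in>UNIV. \<Sum>k\<in>UNIV. (B$k$j)^2)"
    by (rule sum_product[symmetric])
  also have "\<dots> = (norm A * norm B)^2" unfolding sw power_mult_distrib norm_sq_mat by (rule refl)
  finally have "(norm (A ** B))^2 \<le> (norm A * norm B)^2" .
  then show ?thesis by (rule power2_le_imp_le) simp
qed

lemma matrix_add_rdistrib: "((A::real^'n^'m) + B) ** C = A ** C + B ** C"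
  by (vector matrix_matrix_mult_def sum.distrib[symmetric] field_simps)

lemma bounded_bilinear_mm: "bounded_bilinear ((**) :: real^'n^'m \<Rightarrow> real^'p^'n \<Rightarrow> real^'p^'m)"
proof (rule bounded_bilinear.intro)
  show "\<exists>K. \<forall>(a::real^'n^'m) (b::real^'p^'n). norm (a ** b) \<le> norm a * norm b * K"
  proof (intro exI allI)
    fix a :: "real^'n^'m" and b :: "real^'p^'n"
    show "norm (a ** b) \<le> norm a * norm b * 1" using norm_mat_mult_le[of a b] by simp
  qed
qed (simp_all only: matrix_add_ldistrib matrix_add_rdistrib scalar_matrix_assoc matrix_scalar_ac)

lemma cone_zero: assumes "proper_cone K" shows "0 \<in> K"
proof -
  from assms obtain x where x: "x \<in> K" unfolding proper_cone_def is_cone_def by auto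
  have "(\<lambda>n. inverse (real (Suc n)) *\<^sub>R x) \<longlonglongrightarrow> 0 *\<^sub>R x"
    by (intro tendsto_intros LIMSEQ_inverse_real_of_nat)
  moreover have "\<forall>n. inverse (real (Suc n)) *\<^sub>R x \<in> K"
    using assms x unfolding proper_cone_def is_cone_def by auto
  moreover have "closed K" using assms unfolding proper_cone_def by auto
  ultimately have "0 *\<^sub>R x \<in> K" using closed_sequentially[of K "\<lambda>n. inverse (real (Suc n)) *\<^sub>R x" "0 *\<^sub>R x"] by blast
  then show ?thesis by simp
qed

lemma cone_scale: "proper_cone K \<Longrightarrow> x \<in> K \<Longrightarrow> r \<ge> 0 \<Longrightarrow> r *\<^sub>R x \<in> K"
  using cone_zero[of K] unfolding proper_cone_def is_cone_def
  by (cases "r = 0") auto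

lemma cone_add: assumes "proper_cone K" "x \<in> K" "y \<in> K" shows "x + y \<in> K"
proof -
  have "(1/2) *\<^sub>R x + (1/2) *\<^sub>R y \<in> K"
    using assms unfolding proper_cone_def by (intro convexD) auto
  then have "2 *\<^sub>R ((1/2) *\<^sub>R x + (1/2) *\<^sub>R y) \<in> K" using cone_scale[OF assms(1)] by auto
  then show ?thesis by (simp add: scaleR_add_right)
qed

lemma cone_pointed: "proper_cone K \<Longrightarrow> x \<in> K \<Longrightarrow> - x \<in> K \<Longrightarrow> x = 0"
  unfolding proper_cone_def by auto

lemma K_spans:
  fixes A :: "real^'n^'m"
  assumes "proper_cone K" "\<forall>x\<in>K. A *v x = 0"
  shows "A = 0"
proof -
  from assms(1) obtain x0 where "x0 \<in> interior K" unfolding proper_cone_def by auto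
  then obtain e where e: "e > 0" "ball x0 e \<subseteq> K" using mem_interior by blast
  have "A *v v = 0" for v
  proof -
    define d where "d = (e/2) / (norm v + 1)"
    have np: "norm v + 1 > 0" by (smt (verit) norm_ge_zero)
    then have dpos: "d > 0" using e unfolding d_def by (simp add: divide_pos_pos)
    have "norm (d *\<^sub>R v) < e"
    proof -
      have "norm (d *\<^sub>R v) = d * norm v" using dpos by simp
      also have "\<dots> \<le> d * (norm v + 1)" using dpos by simp
      also have "\<dots> = e / 2" unfolding d_def using np by (simp add: divide_simps)
      finally show ?thesis using e by simp
    qed
    then have "x0 + d *\<^sub>R v \<in> K" using e by (auto simp: dist_norm)
    moreover have "x0 \<in> K" using e by auto
    ultimately have "A *v (x0 + d *\<^sub>R v) = 0" "A *v x0 = 0" using assms(2) by auto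
    then have "d *\<^sub>R (A *v v) = 0" by (simp add: matrix_vector_right_distrib matrix_vector_mult_scaleR)
    then show ?thesis using dpos by simp
  qed
  then show ?thesis by (simp add: matrix_eq)
qed

lemma pi_mult: "A \<in> pi_cone K \<Longrightarrow> B \<in> pi_cone K \<Longrightarrow> A ** B \<in> pi_cone K"
  unfolding pi_cone_def by (simp add: matrix_vector_mul_assoc[symmetric])

lemma pi_one: "mat 1 \<in> pi_cone K" unfolding pi_cone_def by simp

lemma matpow_pi: "A \<in> pi_cone K \<Longrightarrow> matpow A j \<in> pi_cone K"
  by (induction j) (auto simp: pi_one pi_mult)

lemma matpow_Suc': "matpow A (Suc j) = matpow A j ** A"
  by (induction j) (auto simp: matrix_mul_assoc)

lemma isCont_mv: "isCont (\<lambda>A::real^'n^'m. A *v x) A0"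
proof -
  have "linear (\<lambda>A::real^'n^'m. A *v x)"
    by (rule linearI) (simp_all add: matrix_vector_mult_add_rdistrib scaleR_matrix_vector_assoc)
  then have "bounded_linear (\<lambda>A::real^'n^'m. A *v x)" by (simp only: linear_conv_bounded_linear)
  then show ?thesis by (rule linear_continuous_at)
qed

lemma pi_closed: fixes K :: "(real^'n) set" assumes "proper_cone K" shows "closed (pi_cone K)"
proof -
  have "pi_cone K = (\<Inter>x\<in>K. {A::real^'n^'n. A *v x \<in> K})" unfolding pi_cone_def by auto
  moreover have "closed {A::real^'n^'n. A *v x \<in> K}" for x
  proof -
    have "closed ((\<lambda>A::real^'n^'n. A *v x) -` K)"
      using assms unfolding proper_cone_def
      by (intro continuous_closed_vimage isCont_mv) auto
    then show ?thesis by (simp add: vimage_def)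
  qed
  ultimately show ?thesis by (simp only:) (rule closed_INT, blast)
qed

lemma continuous_on_mm [continuous_intros]:
  fixes f :: "'a::topological_space \<Rightarrow> real^'n^'m" and g :: "'a \<Rightarrow> real^'p^'n"
  shows "continuous_on S f \<Longrightarrow> continuous_on S g \<Longrightarrow> continuous_on S (\<lambda>x. f x ** g x)"
  by (rule bounded_bilinear.continuous_on[OF bounded_bilinear_mm])

lemma tendsto_mm [tendsto_intros]:
  fixes f :: "'a \<Rightarrow> real^'n^'m" and g :: "'a \<Rightarrow> real^'p^'n"
  shows "(f \<longlongrightarrow> a) F \<Longrightarrow> (g \<longlongrightarrow> b) F \<Longrightarrow> ((\<lambda>x. f x ** g x) \<longlongrightarrow> a ** b) F"
  by (rule bounded_bilinear.tendsto[OF bounded_bilinear_mm])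

lemma continuous_on_matpow [continuous_intros]:
  fixes f :: "'a::topological_space \<Rightarrow> real^'n^'n"
  shows "continuous_on S f \<Longrightarrow> continuous_on S (\<lambda>x. matpow (f x) j)"
proof (induction j)
  case 0 then show ?case by (simp add: continuous_on_const)
next
  case (Suc j) then show ?case by (simp add: continuous_on_mm)
qed

definition Nf :: "(real^'n) set \<Rightarrow> real^'n^'n \<Rightarrow> real^'n^'n \<Rightarrow> (real^'n) set" where
  "Nf K X B = {x \<in> K. \<forall>j. (X ** matpow B j) *v x = 0}"

lemma Nf_face:
  fixes K :: "(real^'n) set"
  assumes K: "proper_cone K" and X: "X \<in> pi_cone K" and B: "B \<in> pi_cone K"
  shows "is_face K (Nf K X B)" "\<forall>x\<in>Nf K X B. B *v x \<in> Nf K X B"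
proof -
  have Wpi: "X ** matpow B j \<in> pi_cone K" for j using X B by (simp add: pi_mult matpow_pi)
  have "0 \<in> Nf K X B" unfolding Nf_def using cone_zero[OF K] by simp
  moreover have "r *\<^sub>R x \<in> Nf K X B" if "r > 0" "x \<in> Nf K X B" for r x
    using that cone_scale[OF K, of x r] unfolding Nf_def by (simp add: matrix_vector_mult_scaleR)
  ultimately have cone: "is_cone (Nf K X B)" unfolding is_cone_def by blast
  have cvx: "convex (Nf K X B)"
  proof (rule convexI)
    fix x y :: "real^'n" and u v :: real
    assume xy: "x \<in> Nf K X B" "y \<in> Nf K X B" and uv: "0 \<le> u" "0 \<le> v" "u + v = 1"
    have "u *\<^sub>R x + v *\<^sub>R y \<in> K"
      using K xy uv unfolding proper_cone_def Nf_def by (intro convexD) auto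
    moreover have "(X ** matpow B j) *v (u *\<^sub>R x + v *\<^sub>R y) = 0" for j
      using xy unfolding Nf_def by (simp add: matrix_vector_right_distrib matrix_vector_mult_scaleR)
    ultimately show "u *\<^sub>R x + v *\<^sub>R y \<in> Nf K X B" unfolding Nf_def by blast
  qed
  have her: "y \<in> Nf K X B" if "x \<in> Nf K X B" "cone_ge K x y" "cone_ge K y 0" for x y
  proof -
    have yK: "y \<in> K" using that(3) unfolding cone_ge_def by simp
    have "(X ** matpow B j) *v y = 0" for j
    proof -
      have "(X ** matpow B j) *v (x - y) \<in> K" using Wpi that(2) unfolding pi_cone_def cone_ge_def by blast
      moreover have "(X ** matpow B j) *v x = 0" using that(1) unfolding Nf_def by blast
      ultimately have "- ((X ** matpow B j) *v y) \<in> K" by (simp add: matrix_vector_mult_diff_distrib)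
      moreover have "(X ** matpow B j) *v y \<in> K" using Wpi yK unfolding pi_cone_def by blast
      ultimately show ?thesis using cone_pointed[OF K] by blast
    qed
    then show ?thesis using yK unfolding Nf_def by blast
  qed
  show "is_face K (Nf K X B)" unfolding is_face_def using cone cvx her unfolding Nf_def by blast
  show "\<forall>x\<in>Nf K X B. B *v x \<in> Nf K X B"
  proof
    fix x assume x: "x \<in> Nf K X B"
    have "B *v x \<in> K" using x B unfolding Nf_def pi_cone_def by blast
    moreover have "(X ** matpow B j) *v (B *v x) = 0" for j
    proof -
      have "(X ** matpow B j) *v (B *v x) = (X ** matpow B (Suc j)) *v x"
        by (simp only: matpow_Suc' matrix_vector_mul_assoc matrix_mul_assoc)
      note this
      moreover have "(X ** matpow B (Suc j)) *v x = 0" using x unfolding Nf_def by blast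
      ultimately show ?thesis by simp
    qed
    ultimately show "B *v x \<in> Nf K X B" unfolding Nf_def by blast
  qed
qed

lemma irr_nonzero:
  fixes K :: "(real^'n) set"
  assumes K: "proper_cone K" and irr: "K_irreducible K B"
    and X: "X \<in> pi_cone K" and Y: "Y \<in> pi_cone K" and X0: "X \<noteq> 0" and Y0: "Y \<noteq> 0"
  shows "\<exists>j. X ** matpow B j ** Y \<noteq> 0"
proof -
  have B: "B \<in> pi_cone K" using irr unfolding K_irreducible_def by blast
  note F = Nf_face[OF K X B]
  have "Nf K X B \<noteq> K"
  proof
    assume "Nf K X B = K"
    then have "\<forall>x\<in>K. X *v x = 0" unfolding Nf_def by (metis (mono_tags, lifting) matpow.simps(1) matrix_mul_rid mem_Collect_eq)
    then show False using K_spans[OF K] X0 by blast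
  qed
  then have N0: "Nf K X B = {0}" using irr F unfolding K_irreducible_def by blast
  obtain x where x: "x \<in> K" "Y *v x \<noteq> 0" using K_spans[OF K, of Y] Y0 by blast
  have "Y *v x \<in> K" using Y x unfolding pi_cone_def by blast
  then have "Y *v x \<notin> Nf K X B" using N0 x by blast
  then obtain j where "(X ** matpow B j) *v (Y *v x) \<noteq> 0" using \<open>Y *v x \<in> K\<close> unfolding Nf_def by blast
  then have "(X ** matpow B j ** Y) *v x \<noteq> 0" by (simp add: matrix_vector_mul_assoc)
  then show ?thesis by (intro exI[of _ j]) auto
qed

lemma pi_scale: "proper_cone K \<Longrightarrow> X \<in> pi_cone K \<Longrightarrow> r \<ge> 0 \<Longrightarrow> r *\<^sub>R X \<in> pi_cone K"
  unfolding pi_cone_def by (simp add: scaleR_matrix_vector_assoc[symmetric] cone_scale)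

lemma QI:
  fixes K :: "(real^'n) set"
  assumes K: "proper_cone K" and irr: "K_irreducible K B"
  shows "\<exists>c>0. \<exists>J. \<exists>\<eta>>0. \<forall>B'. dist B' B < \<eta> \<longrightarrow>
     (\<forall>X\<in>pi_cone K. \<forall>Y\<in>pi_cone K. \<exists>j\<le>J. norm (X ** matpow B' j ** Y) \<ge> c * norm X * norm Y)"
proof -
  define P where "P = pi_cone K \<inter> sphere (0::real^'n^'n) 1"
  define C where "C = P \<times> P"
  have cP: "compact P" unfolding P_def using pi_closed[OF K] by (intro closed_Int_compact) auto
  then have cC: "compact C" unfolding C_def by (intro compact_Times)
  define U where "U j = {p::(real^'n^'n) \<times> (real^'n^'n). fst p ** matpow B j ** snd p \<noteq> 0}" for j
  have oU: "open (U j)" for j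
    unfolding U_def by (intro open_Collect_neq continuous_intros)
  have cov: "C \<subseteq> (\<Union>j\<in>UNIV. U j)"
  proof
    fix p assume "p \<in> C"
    then have "fst p \<in> pi_cone K" "snd p \<in> pi_cone K" "fst p \<noteq> 0" "snd p \<noteq> 0"
      unfolding C_def P_def by auto
    then obtain j where "fst p ** matpow B j ** snd p \<noteq> 0" using irr_nonzero[OF K irr] by blast
    then show "p \<in> (\<Union>j\<in>UNIV. U j)" unfolding U_def by blast
  qed
  obtain C' where C': "finite C'" "C \<subseteq> (\<Union>j\<in>C'. U j)"
  proof (rule compactE_image[OF cC, of UNIV U])
    show "\<And>T. T \<in> UNIV \<Longrightarrow> open (U T)" using oU by simp
    show "C \<subseteq> (\<Union>j\<in>UNIV. U j)" using cov .
  qed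
  define J where "J = Max (insert 0 C')"
  have JC: "j \<in> C' \<Longrightarrow> j \<le> J" for j unfolding J_def using C' by simp
  define g where "g q = (\<Sum>j\<le>J. norm (fst (snd q) ** matpow (fst q) j ** snd (snd q)))"
    for q :: "(real^'n^'n) \<times> (real^'n^'n) \<times> (real^'n^'n)"
  have gcont: "continuous_on S g" for S
    unfolding g_def by (intro continuous_intros)
  have gpos: "g (B, p) > 0" if pC: "p \<in> C" for p
  proof -
    obtain j where j: "j \<in> C'" "p \<in> U j" using C' pC by blast
    have "0 < norm (fst p ** matpow B j ** snd p)" using j unfolding U_def by auto
    also have "\<dots> \<le> g (B, p)" unfolding g_def fst_conv snd_conv
      by (rule member_le_sum[where f="\<lambda>j. norm (fst p ** matpow B j ** snd p)"]) (use JC j in auto)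
    finally show ?thesis .
  qed
  obtain c0 where c0: "c0 > 0" "\<And>p. p \<in> C \<Longrightarrow> g (B, p) \<ge> c0"
  proof (cases "C = {}")
    case True then show ?thesis using that[of 1] by auto
  next
    case False
    have "continuous_on C (\<lambda>p. g (B, p))" by (intro continuous_on_compose2[OF gcont, of _ _ UNIV] continuous_intros) auto
    then obtain p0 where "p0 \<in> C" "\<And>p. p \<in> C \<Longrightarrow> g (B, p0) \<le> g (B, p)"
      using continuous_attains_inf[OF cC False] by blast
    then show ?thesis using that[of "g (B, p0)"] gpos by blast
  qed
  define D where "D = cball B 1 \<times> C"
  have "compact D" unfolding D_def using cC by (intro compact_Times) auto
  then have "uniformly_continuous_on D g" using gcont by (intro compact_uniformly_continuous)
  then obtain d where d: "d > 0" "\<And>x x'. x \<in> D \<Longrightarrow> x' \<in> D \<Longrightarrow> dist x' x < d \<Longrightarrow> dist (g x') (g x) < c0 / 2"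
    unfolding uniformly_continuous_on_def using c0 by (metis half_gt_zero)
  define \<eta> where "\<eta> = min d 1"
  define c where "c = c0 / (2 * (real J + 1))"
  have cpos: "c > 0" unfolding c_def using c0 by simp
  have main: "\<exists>j\<le>J. norm (X ** matpow B' j ** Y) \<ge> c"
    if B': "dist B' B < \<eta>" and XY: "(X, Y) \<in> C" for B' X Y
  proof (rule ccontr)
    assume "\<not> ?thesis"
    then have lt: "\<And>j. j \<le> J \<Longrightarrow> norm (X ** matpow B' j ** Y) < c" by force
    have "g (B', X, Y) < (\<Sum>j\<le>J. c)" unfolding g_def
      using lt by (intro sum_strict_mono) auto
    also have "\<dots> = c0 / 2" unfolding c_def by (simp add: field_simps)
    finally have g1: "g (B', X, Y) < c0 / 2" .
    have "(B', X, Y) \<in> D" "(B, X, Y) \<in> D" using B' XY unfolding D_def \<eta>_def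
      by (auto simp: dist_commute)
    moreover have "dist (B', X, Y) (B, X, Y) < d" using B' unfolding \<eta>_def by (simp add: dist_Pair_Pair)
    ultimately have "dist (g (B', X, Y)) (g (B, X, Y)) < c0 / 2" using d by blast
    then have g2: "g (B, X, Y) - g (B', X, Y) < c0 / 2" unfolding dist_real_def by linarith
    have g3: "g (B, X, Y) \<ge> c0" using c0 XY by blast
    show False using g1 g2 g3 by linarith
  qed
  have "\<forall>B'. dist B' B < \<eta> \<longrightarrow> (\<forall>X\<in>pi_cone K. \<forall>Y\<in>pi_cone K. \<exists>j\<le>J. norm (X ** matpow B' j ** Y) \<ge> c * norm X * norm Y)"
  proof (intro allI impI ballI)
    fix B' X Y assume B': "dist B' B < \<eta>" and X: "X \<in> pi_cone K" and Y: "Y \<in> pi_cone K"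
    show "\<exists>j\<le>J. norm (X ** matpow B' j ** Y) \<ge> c * norm X * norm Y"
    proof (cases "X = 0 \<or> Y = 0")
      case True then show ?thesis by (intro exI[of _ 0]) auto
    next
      case False
      define X' where "X' = inverse (norm X) *\<^sub>R X"
      define Y' where "Y' = inverse (norm Y) *\<^sub>R Y"
      have "(X', Y') \<in> C" unfolding C_def P_def X'_def Y'_def using False X Y
        by (auto intro!: pi_scale[OF K])
      then obtain j where j: "j \<le> J" "norm (X' ** matpow B' j ** Y') \<ge> c" using main[OF B'] by blast
      have "X' ** matpow B' j ** Y' = (inverse (norm X) * inverse (norm Y)) *\<^sub>R (X ** matpow B' j ** Y)"
        unfolding X'_def Y'_def by (simp add: scalar_matrix_assoc[symmetric] matrix_scalar_ac)
      then have "norm (X' ** matpow B' j ** Y') = norm (X ** matpow B' j ** Y) / (norm X * norm Y)"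
        using False by (simp add: field_simps)
      then have "c \<le> norm (X ** matpow B' j ** Y) / (norm X * norm Y)" using j by simp
      then have "c * (norm X * norm Y) \<le> norm (X ** matpow B' j ** Y)"
        using False by (simp add: pos_le_divide_eq)
      then show ?thesis using j by (intro exI[of _ j]) (simp add: mult.assoc)
    qed
  qed
  moreover have "\<eta> > 0" unfolding \<eta>_def using d by simp
  ultimately show ?thesis using cpos by blast
qed

lemma linear_lmul: "linear (\<lambda>Q::real^'n^'m. X ** Q)"
  by (rule linearI) (simp_all add: matrix_add_ldistrib matrix_scalar_ac scalar_matrix_assoc[symmetric])

lemma linear_rmul: "linear (\<lambda>P::real^'n^'m. P ** (Q::real^'p^'n))"
  by (rule linearI) (simp_all add: matrix_add_rdistrib scalar_matrix_assoc)

lemma hull_mult: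
  fixes P :: "real^'n^'n"
  assumes P: "P \<in> convex hull S1" and Q: "Q \<in> convex hull S2"
  shows "P ** Q \<in> convex hull {x ** y | x y. x \<in> S1 \<and> y \<in> S2}"
proof -
  define H where "H = convex hull {x ** y | x y. x \<in> S1 \<and> y \<in> S2}"
  have cH: "convex H" unfolding H_def by simp
  have step1: "x ** Q' \<in> H" if x: "x \<in> S1" and Q': "Q' \<in> convex hull S2" for x Q'
  proof -
    have "S2 \<subseteq> (\<lambda>Q. x ** Q) -` H" using x unfolding H_def by (auto intro: hull_inc)
    moreover have "convex ((\<lambda>Q. x ** Q) -` H)" by (rule convex_linear_vimage[OF linear_lmul cH])
    ultimately have "convex hull S2 \<subseteq> (\<lambda>Q. x ** Q) -` H" by (rule hull_minimal)
    then show ?thesis using Q' by blast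
  qed
  have "S1 \<subseteq> (\<lambda>P. P ** Q) -` H" using step1 Q by blast
  moreover have "convex ((\<lambda>P. P ** Q) -` H)" by (rule convex_linear_vimage[OF linear_rmul cH])
  ultimately have "convex hull S1 \<subseteq> (\<lambda>P. P ** Q) -` H" by (rule hull_minimal)
  then show ?thesis using P unfolding H_def by blast
qed

lemma hull_max:
  fixes f :: "real^'n^'n \<Rightarrow> real^'p^'m"
  assumes f: "linear f" and C: "C \<in> convex hull S"
  shows "\<exists>P\<in>S. norm (f P) \<ge> norm (f C)"
proof (rule ccontr)
  assume "\<not> ?thesis"
  then have "S \<subseteq> f -` ball 0 (norm (f C))" by (auto simp: not_le)
  moreover have "convex (f -` ball 0 (norm (f C)))" by (rule convex_linear_vimage[OF f convex_ball])
  ultimately have "convex hull S \<subseteq> f -` ball 0 (norm (f C))" by (rule hull_minimal)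
  then show False using C by auto
qed

locale grow =
  fixes K :: "(real^'n) set" and N :: "real \<Rightarrow> (real^'n^'n) set"
    and T :: real and B :: "real^'n^'n" and c :: real and J :: nat
  assumes K: "proper_cone K"
    and Npi: "\<And>t X. X \<in> N t \<Longrightarrow> X \<in> pi_cone K"
    and Nmul: "\<And>s t X Y. X \<in> N s \<Longrightarrow> Y \<in> N t \<Longrightarrow> X ** Y \<in> N (s + t)"
    and T: "T \<ge> 0" and B: "B \<in> convex hull (N T)"
    and c: "c > 0"
    and qi: "\<forall>X\<in>pi_cone K. \<forall>Y\<in>pi_cone K. \<exists>j\<le>J. norm (X ** matpow B j ** Y) \<ge> c * norm X * norm Y"
begin

lemma pow_hull: "j \<ge> 1 \<Longrightarrow> matpow B j \<in> convex hull (N (real j * T))"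
proof (induction j rule: nat_induct_at_least)
  case base then show ?case using B by simp
next
  case (Suc j)
  have "B ** matpow B j \<in> convex hull {x ** y | x y. x \<in> N T \<and> y \<in> N (real j * T)}"
    by (rule hull_mult[OF B Suc.IH])
  moreover have "{x ** y | x y. x \<in> N T \<and> y \<in> N (real j * T)} \<subseteq> N (real (Suc j) * T)"
  proof
    fix z assume "z \<in> {x ** y | x y. x \<in> N T \<and> y \<in> N (real j * T)}"
    then obtain x y where "z = x ** y" "x \<in> N T" "y \<in> N (real j * T)" by blast
    then have "z \<in> N (T + real j * T)" using Nmul[of x T y "real j * T"] by simp
    moreover have "T + real j * T = real (Suc j) * T" by (simp add: algebra_simps)
    ultimately show "z \<in> N (real (Suc j) * T)" by simp
  qed
  ultimately have "B ** matpow B j \<in> convex hull N (real (Suc j) * T)"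
    using hull_mono[of "{x ** y | x y. x \<in> N T \<and> y \<in> N (real j * T)}" "N (real (Suc j) * T)" convex]
    by blast
  then show ?case by simp
qed

lemma step:
  assumes Z: "Z \<in> N t" and X0: "X0 \<in> N a"
  shows "\<exists>j\<le>J. \<exists>W. W \<in> N (t + real j * T + a) \<and> norm W \<ge> c * norm Z * norm X0"
proof -
  obtain j where j: "j \<le> J" "norm (Z ** matpow B j ** X0) \<ge> c * norm Z * norm X0"
    using qi Npi[OF Z] Npi[OF X0] by blast
  show ?thesis
  proof (cases "j = 0")
    case True
    then have "Z ** X0 \<in> N (t + real j * T + a)" using Nmul[OF Z X0] by simp
    moreover have "norm (Z ** X0) \<ge> c * norm Z * norm X0" using j True by simp
    ultimately show ?thesis using j(1) by blast
  next
    case False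
    then have "matpow B j \<in> convex hull (N (real j * T))" using pow_hull by simp
    moreover have "linear (\<lambda>P. Z ** P ** X0)"
      by (rule linearI) (simp_all add: matrix_add_ldistrib matrix_add_rdistrib matrix_scalar_ac scalar_matrix_assoc[symmetric])
    ultimately obtain P where P: "P \<in> N (real j * T)" "norm (Z ** P ** X0) \<ge> norm (Z ** matpow B j ** X0)"
      using hull_max by blast
    have "Z ** P ** X0 \<in> N (t + real j * T + a)" using Nmul[OF Nmul[OF Z P(1)] X0] .
    then show ?thesis using P(2) j by (intro exI[of _ j] conjI) (auto intro: order_trans)
  qed
qed

lemma iterate:
  assumes X0: "X0 \<in> N a" and a: "a \<ge> 0" and big: "c * norm X0 \<ge> 2"
  shows "\<exists>t Z. Z \<in> N t \<and> real (Suc k) * a \<le> t \<and> t \<le> real (Suc k) * (a + real J * T)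
           \<and> norm Z \<ge> 2 ^ k * norm X0"
proof (induction k)
  case 0 then show ?case using X0 a T by (intro exI[of _ a] exI[of _ X0]) auto
next
  case (Suc k)
  then obtain t Z where tZ: "Z \<in> N t" "real (Suc k) * a \<le> t" "t \<le> real (Suc k) * (a + real J * T)"
     "norm Z \<ge> 2 ^ k * norm X0" by blast
  obtain j W where jW: "j \<le> J" "W \<in> N (t + real j * T + a)" "norm W \<ge> c * norm Z * norm X0"
    using step[OF tZ(1) X0] by blast
  have "real j * T \<le> real J * T" using jW(1) T by (simp add: mult_right_mono)
  moreover have "0 \<le> real j * T" using T by simp
  ultimately have t1: "real (Suc (Suc k)) * a \<le> t + real j * T + a"
     and t2: "t + real j * T + a \<le> real (Suc (Suc k)) * (a + real J * T)"
    using tZ(2,3) by (simp_all add: algebra_simps)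
  have "c * norm Z * norm X0 = norm Z * (c * norm X0)" by simp
  also have "\<dots> \<ge> norm Z * 2" using big by (simp add: mult_left_mono)
  finally have "norm W \<ge> 2 * norm Z" using jW(3) by simp
  moreover have "2 * norm Z \<ge> 2 ^ Suc k * norm X0" using tZ(4) by simp
  ultimately show ?case using jW(2) t1 t2 by (intro exI[of _ "t + real j * T + a"] exI[of _ W]) auto
qed

end

lemma abstract_growth:
  fixes K :: "(real^'n) set" and N :: "real \<Rightarrow> (real^'n^'n) set"
  assumes K: "proper_cone K"
    and Npi: "\<And>t X. X \<in> N t \<Longrightarrow> X \<in> pi_cone K"
    and Nmul: "\<And>s t X Y. X \<in> N s \<Longrightarrow> Y \<in> N t \<Longrightarrow> X ** Y \<in> N (s + t)"
    and T: "T \<ge> 0" and B: "B \<in> convex hull (N T)"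
    and c: "c > 0"
    and qi: "\<forall>X\<in>pi_cone K. \<forall>Y\<in>pi_cone K. \<exists>j\<le>J. norm (X ** matpow B j ** Y) \<ge> c * norm X * norm Y"
    and unb: "\<And>R. \<exists>a>0. \<exists>X\<in>N a. norm X \<ge> R"
  shows "\<exists>D>0. \<forall>R. \<exists>t\<ge>R. \<exists>Z\<in>N t. norm Z \<ge> 2 powr (t / D) / 2"
proof -
  interpret grow K N T B c J using assms by unfold_locales auto
  obtain a X0 where a: "a > 0" and X0: "X0 \<in> N a" "norm X0 \<ge> max (2 / c) 1" using unb by blast
  have big: "c * norm X0 \<ge> 2"
  proof -
    have "c * norm X0 \<ge> c * (2 / c)" using X0(2) c by (intro mult_left_mono) auto
    then show ?thesis using c by simp
  qed
  define D where "D = a + real J * T"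
  have Dpos: "D > 0" unfolding D_def using a T by (simp add: add_pos_nonneg)
  have "\<forall>R. \<exists>t\<ge>R. \<exists>Z\<in>N t. norm Z \<ge> 2 powr (t / D) / 2"
  proof
    fix R
    obtain k :: nat where k: "real k \<ge> R / a" using real_arch_simple by blast
    obtain t Z where tZ: "Z \<in> N t" "real (Suc k) * a \<le> t" "t \<le> real (Suc k) * D"
      "norm Z \<ge> 2 ^ k * norm X0"
      using iterate[OF X0(1) _ big, of k] a unfolding D_def by auto
    have "R \<le> real k * a" using k a by (simp add: divide_le_eq)
    also have "\<dots> \<le> t"
    proof -
      have "real (Suc k) * a = a + real k * a" by (simp add: algebra_simps)
      then show ?thesis using tZ(2) a by linarith
    qed
    finally have Rt: "R \<le> t" .
    have "t / D \<le> real (Suc k)" using tZ(3) Dpos by (simp add: divide_le_eq mult.commute)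
    then have "2 powr (t / D) \<le> 2 powr real (Suc k)" by (intro powr_mono) auto
    also have "\<dots> = 2 ^ Suc k" by (rule powr_realpow) simp
    finally have "2 powr (t / D) / 2 \<le> 2 ^ k" by simp
    also have "\<dots> \<le> 2 ^ k * norm X0" using X0(2) by simp
    also have "\<dots> \<le> norm Z" using tZ(4) .
    finally show "\<exists>t\<ge>R. \<exists>Z\<in>N t. norm Z \<ge> 2 powr (t / D) / 2" using Rt tZ(1) by blast
  qed
  then show ?thesis using Dpos by blast
qed

lemma powr_bound:
  fixes D t z :: real
  assumes D: "D > 0" and t: "t \<ge> 2 * D" and z: "z \<ge> 2 powr (t / D) / 2"
  shows "z powr (1 / t) \<ge> 2 powr (1 / (2 * D))"
proof -
  have tpos: "t > 0" using D t by simp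
  have "2 powr (t / D) / 2 = 2 powr (t / D - 1)" by (simp add: powr_diff)
  then have "(2 powr (t / D) / 2) powr (1 / t) = 2 powr ((t / D - 1) * (1 / t))"
    by (simp add: powr_powr)
  also have "(t / D - 1) * (1 / t) = 1 / D - 1 / t" using tpos by (simp add: field_simps)
  finally have eq: "(2 powr (t / D) / 2) powr (1 / t) = 2 powr (1 / D - 1 / t)" .
  have "1 / t \<le> 1 / (2 * D)" using t D by (simp add: frac_le)
  then have "1 / (2 * D) \<le> 1 / D - 1 / t" using D by (simp add: field_simps)
  then have "2 powr (1 / (2 * D)) \<le> 2 powr (1 / D - 1 / t)" by (intro powr_mono) auto
  also have "\<dots> = (2 powr (t / D) / 2) powr (1 / t)" using eq by simp
  also have "\<dots> \<le> z powr (1 / t)" using z tpos by (intro powr_mono2) auto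
  finally show ?thesis .
qed

lemma jsr_cont_contra:
  fixes St :: "real \<Rightarrow> (real^'n^'n) set"
  assumes jsr: "jsr_cont_is St 1" and NS: "\<And>t. N t \<subseteq> St t"
    and gr: "\<exists>D>0. \<forall>R. \<exists>t\<ge>R. \<exists>Z\<in>N t. norm Z \<ge> 2 powr (t / D) / 2"
  shows False
proof -
  obtain D where D: "D > 0" "\<And>R. \<exists>t\<ge>R. \<exists>Z\<in>N t. norm Z \<ge> 2 powr (t / D) / 2" using gr by blast
  define q where "q = 2 powr (1 / (2 * D))"
  have q1: "q > 1" unfolding q_def using D by simp
  have ev1: "\<forall>\<^sub>F t in at_top. (SUP S\<in>St t. norm S) powr (1 / t) < q"
    using jsr q1 unfolding jsr_cont_is_def by (auto intro: order_tendstoD)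
  have ev2: "\<forall>\<^sub>F t in at_top. bounded (St t)" using jsr unfolding jsr_cont_is_def by auto
  obtain R0 where R0: "\<And>t. t \<ge> R0 \<Longrightarrow> (SUP S\<in>St t. norm S) powr (1 / t) < q \<and> bounded (St t)"
    using eventually_conj[OF ev1 ev2] unfolding eventually_at_top_linorder by blast
  obtain t Z where tZ: "t \<ge> max R0 (2 * D)" "Z \<in> N t" "norm Z \<ge> 2 powr (t / D) / 2" using D(2) by blast
  have t: "t \<ge> R0" "t \<ge> 2 * D" using tZ(1) by auto
  have ZS: "Z \<in> St t" using NS tZ(2) by blast
  have bdd: "bdd_above ((\<lambda>S. norm S) ` St t)" using R0[OF t(1)] by (auto simp: bounded_iff bdd_above_def)
  have "norm Z \<le> (SUP S\<in>St t. norm S)" by (rule cSUP_upper[OF ZS bdd])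
  then have "(SUP S\<in>St t. norm S) \<ge> 2 powr (t / D) / 2" using tZ(3) by linarith
  then have "(SUP S\<in>St t. norm S) powr (1 / t) \<ge> q" unfolding q_def by (rule powr_bound[OF D(1) t(2)])
  then show False using R0[OF t(1)] by simp
qed

lemma jsr_disc_contra:
  fixes St :: "nat \<Rightarrow> (real^'n^'n) set"
  assumes jsr: "jsr_disc_is St 1" and NS: "\<And>t Z. Z \<in> N t \<Longrightarrow> \<exists>k. t = real k \<and> Z \<in> St k"
    and gr: "\<exists>D>0. \<forall>R. \<exists>t\<ge>R. \<exists>Z\<in>N t. norm Z \<ge> 2 powr (t / D) / 2"
  shows False
proof -
  obtain D where D: "D > 0" "\<And>R. \<exists>t\<ge>R. \<exists>Z\<in>N t. norm Z \<ge> 2 powr (t / D) / 2" using gr by blast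
  define q where "q = 2 powr (1 / (2 * D))"
  have q1: "q > 1" unfolding q_def using D by simp
  have ev1: "\<forall>\<^sub>F t in sequentially. (SUP S\<in>St t. norm S) powr (1 / real t) < q"
    using jsr q1 unfolding jsr_disc_is_def by (auto intro: order_tendstoD)
  have ev2: "\<forall>\<^sub>F t in sequentially. bounded (St t)" using jsr unfolding jsr_disc_is_def by auto
  obtain R0 where R0: "\<And>t. t \<ge> R0 \<Longrightarrow> (SUP S\<in>St t. norm S) powr (1 / real t) < q \<and> bounded (St t)"
    using eventually_conj[OF ev1 ev2] unfolding eventually_sequentially by blast
  obtain t Z where tZ: "t \<ge> max (real R0) (2 * D)" "Z \<in> N t" "norm Z \<ge> 2 powr (t / D) / 2" using D(2) by blast
  obtain k where k: "t = real k" "Z \<in> St k" using NS[OF tZ(2)] by blast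
  have t: "k \<ge> R0" "real k \<ge> 2 * D" using tZ(1) k(1) by auto
  have bdd: "bdd_above ((\<lambda>S. norm S) ` St k)" using R0[OF t(1)] by (auto simp: bounded_iff bdd_above_def)
  have "norm Z \<le> (SUP S\<in>St k. norm S)" by (rule cSUP_upper[OF k(2) bdd])
  then have "(SUP S\<in>St k. norm S) \<ge> 2 powr (real k / D) / 2" using tZ(3) unfolding k(1) by linarith
  then have "(SUP S\<in>St k. norm S) powr (1 / real k) \<ge> q" unfolding q_def by (rule powr_bound[OF D(1) t(2)])
  then show False using R0[OF t(1)] by simp
qed

lemma disc_mul: "X \<in> disc_sg M s \<Longrightarrow> Y \<in> disc_sg M t \<Longrightarrow> X ** Y \<in> disc_sg M (s + t)"
proof (induction s arbitrary: X)
  case 0 then show ?case by simp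
next
  case (Suc s)
  then obtain A X' where AX: "X = A ** X'" "A \<in> M" "X' \<in> disc_sg M s" by auto
  then have "X' ** Y \<in> disc_sg M (s + t)" using Suc.IH Suc.prems(2) by blast
  then have "A ** (X' ** Y) \<in> disc_sg M (Suc (s + t))" using AX(2) by auto
  then show ?case using AX(1) by (simp add: matrix_mul_assoc)
qed

lemma unbounded_big:
  fixes S :: "(real^'n^'n) set"
  assumes "\<not> bounded S"
  shows "\<exists>X\<in>S. norm X \<ge> R"
proof (rule ccontr)
  assume "\<not> ?thesis"
  then have "\<forall>X\<in>S. norm X \<le> R" by (auto simp: not_le less_imp_le)
  then have "bounded S" unfolding bounded_iff by blast
  then show False using assms by blast
qed

lemma disc_case:
  fixes K :: "(real^'n) set" and S :: "(real^'n^'n) set"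
  assumes K: "proper_cone K" and S: "S = (\<Union>t. disc_sg M t)" and Spi: "S \<subseteq> pi_cone K"
    and irr: "irred_disc K (disc_sg M)" and jsr: "jsr_disc_is (disc_sg M) 1"
  shows "bounded S"
proof (rule ccontr)
  assume nb: "\<not> bounded S"
  define N where "N t = {X. \<exists>k. t = real k \<and> X \<in> disc_sg M k}" for t :: real
  have Npi: "X \<in> pi_cone K" if "X \<in> N t" for t X using that Spi unfolding N_def S by blast
  have Nmul: "X ** Y \<in> N (s + t)" if XN: "X \<in> N s" and YN: "Y \<in> N t" for s t X Y
  proof -
    obtain k l where "s = real k" "X \<in> disc_sg M k" "t = real l" "Y \<in> disc_sg M l"
      using XN YN unfolding N_def by blast
    then show ?thesis unfolding N_def using disc_mul[of X M k Y l] by (intro CollectI exI[of _ "k + l"]) auto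
  qed
  obtain T0 A where T0: "T0 > 0" "A \<in> convex hull (disc_sg M T0)" "K_irreducible K A"
    using irr unfolding irred_disc_def by blast
  have NT: "N (real T0) = disc_sg M T0" unfolding N_def by auto
  obtain c J \<eta> where cJ: "c > 0" "\<eta> > 0" "\<forall>B'. dist B' A < \<eta> \<longrightarrow>
     (\<forall>X\<in>pi_cone K. \<forall>Y\<in>pi_cone K. \<exists>j\<le>J. norm (X ** matpow B' j ** Y) \<ge> c * norm X * norm Y)"
    using QI[OF K T0(3)] by blast
  have qi: "\<forall>X\<in>pi_cone K. \<forall>Y\<in>pi_cone K. \<exists>j\<le>J. norm (X ** matpow A j ** Y) \<ge> c * norm X * norm Y"
    using cJ by simp
  have unb: "\<exists>a>0. \<exists>X\<in>N a. norm X \<ge> R" for R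
  proof -
    obtain X where X: "X \<in> S" "norm X \<ge> max R (norm (mat 1 :: real^'n^'n) + 1)"
      using unbounded_big[OF nb] by blast
    then obtain k where k: "X \<in> disc_sg M k" using S by blast
    have "k \<noteq> 0"
    proof
      assume "k = 0" then have "X = mat 1" using k by simp
      then show False using X(2) by simp
    qed
    then show ?thesis using X k unfolding N_def by (intro exI[of _ "real k"] conjI bexI[of _ X]) auto
  qed
  have gr: "\<exists>D>0. \<forall>R. \<exists>t\<ge>R. \<exists>Z\<in>N t. norm Z \<ge> 2 powr (t / D) / 2"
    by (rule abstract_growth[OF K Npi Nmul _ _ cJ(1) qi unb, where T="real T0"]) (use NT T0 in auto)
  show False
    by (rule jsr_disc_contra[OF jsr _ gr]) (auto simp: N_def)
qed

lemma matrix_diff_rdistrib: "((A::real^'n^'m) - B) ** C = A ** C - B ** C"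
  by (vector matrix_matrix_mult_def sum_subtractf[symmetric] field_simps)

lemma borel_lebesgue_shift:
  fixes g :: "real \<Rightarrow> 'b::euclidean_space"
  assumes g: "g \<in> borel_measurable lebesgue"
  shows "(\<lambda>x. g (x - a)) \<in> borel_measurable lebesgue"
proof (rule measurableI)
  fix x show "x \<in> space lebesgue \<Longrightarrow> g (x - a) \<in> space borel" by simp
next
  fix B :: "'b set" assume B: "B \<in> sets borel"
  have "g -` B \<inter> space lebesgue \<in> sets lebesgue" by (rule measurable_sets[OF g B])
  then have "(\<lambda>x. a + x) ` (g -` B \<inter> space lebesgue) \<in> sets lebesgue"
    by (rule lebesgue_sets_translation)
  moreover have "(\<lambda>x. g (x - a)) -` B \<inter> space lebesgue = (\<lambda>x. a + x) ` (g -` B \<inter> space lebesgue)"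
  proof (rule set_eqI)
    fix x :: real
    have "x = a + (x - a)" by simp
    then show "x \<in> (\<lambda>x. g (x - a)) -` B \<inter> space lebesgue \<longleftrightarrow> x \<in> (\<lambda>x. a + x) ` (g -` B \<inter> space lebesgue)"
      by (auto simp: image_iff intro!: bexI[of _ "x - a"])
  qed
  ultimately show "(\<lambda>x. g (x - a)) -` B \<inter> space lebesgue \<in> sets lebesgue" by simp
qed

lemma cont_sg_I0:
  fixes t :: real and \<sigma> \<Phi> :: "real \<Rightarrow> real^'n^'n"
  assumes "\<forall>s\<in>{0..t}. ((\<lambda>r. \<sigma> r ** \<Phi> r) has_integral (\<Phi> s - mat 1)) {0..s}" "t \<ge> 0"
  shows "\<Phi> 0 = (mat 1 :: real^'n^'n)"
proof -
  have "((\<lambda>r. \<sigma> r ** \<Phi> r) has_integral (\<Phi> 0 - mat 1)) {0..0}" using bspec[OF assms(1), of 0] assms(2) by simp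
  then have "((\<lambda>r. \<sigma> r ** \<Phi> r) has_integral (\<Phi> 0 - mat 1)) {0}" by simp
  moreover have "((\<lambda>r. \<sigma> r ** \<Phi> r) has_integral 0) {0}" by (rule has_integral_refl(2))
  ultimately have "\<Phi> 0 - mat 1 = 0" by (rule has_integral_unique)
  then show ?thesis by simp
qed

lemma cont_mul:
  fixes M :: "(real^'n^'n) set"
  assumes s: "s \<ge> 0" and t: "t \<ge> 0" and X: "X \<in> cont_sg M s" and Y: "Y \<in> cont_sg M t"
  shows "Y ** X \<in> cont_sg M (s + t)"
proof -
  obtain \<sigma>1 \<Phi>1 where X1: "X = \<Phi>1 s" and m1: "\<sigma>1 \<in> borel_measurable (lebesgue_on {0..s})"
    and M1: "\<forall>r\<in>{0..s}. \<sigma>1 r \<in> M" and c1: "continuous_on {0..s} \<Phi>1"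
    and i1: "\<forall>r\<in>{0..s}. ((\<lambda>u. \<sigma>1 u ** \<Phi>1 u) has_integral (\<Phi>1 r - mat 1)) {0..r}"
    using X unfolding cont_sg_def by blast
  obtain \<sigma>2 \<Phi>2 where Y2: "Y = \<Phi>2 t" and m2: "\<sigma>2 \<in> borel_measurable (lebesgue_on {0..t})"
    and M2: "\<forall>r\<in>{0..t}. \<sigma>2 r \<in> M" and c2: "continuous_on {0..t} \<Phi>2"
    and i2: "\<forall>r\<in>{0..t}. ((\<lambda>u. \<sigma>2 u ** \<Phi>2 u) has_integral (\<Phi>2 r - mat 1)) {0..r}"
    using Y unfolding cont_sg_def by blast
  have P20: "\<Phi>2 0 = mat 1" by (rule cont_sg_I0[OF i2 t])
  define \<sigma> where "\<sigma> r = (if r \<le> s then \<sigma>1 r else \<sigma>2 (r - s))" for r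
  define \<Phi> where "\<Phi> r = (if r \<le> s then \<Phi>1 r else \<Phi>2 (r - s) ** \<Phi>1 s)" for r
  have end_eq: "\<Phi> (s + t) = Y ** X"
  proof (cases "t = 0")
    case True then show ?thesis unfolding \<Phi>_def X1 Y2 using P20 by simp
  next
    case False then show ?thesis unfolding \<Phi>_def X1 Y2 using t by simp
  qed
  have Mall: "\<forall>r\<in>{0..s+t}. \<sigma> r \<in> M"
  proof
    fix r assume r: "r \<in> {0..s+t}"
    show "\<sigma> r \<in> M"
    proof (cases "r \<le> s")
      case True then show ?thesis unfolding \<sigma>_def using M1 r by simp
    next
      case False then show ?thesis unfolding \<sigma>_def using M2 r by simp
    qed
  qed
  have meas: "\<sigma> \<in> borel_measurable (lebesgue_on {0..s+t})"
  proof (rule borel_measurable_if_D)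
    have e1: "(\<lambda>x. if x \<in> {0..s} then \<sigma>1 x else 0) \<in> borel_measurable lebesgue"
      by (rule borel_measurable_if_I[OF m1]) simp
    have "\<sigma>2 \<in> borel_measurable (lebesgue_on {0<..t})"
      by (rule measurable_restrict_mono[OF m2]) auto
    then have "(\<lambda>y. if y \<in> {0<..t} then \<sigma>2 y else 0) \<in> borel_measurable lebesgue"
      by (rule borel_measurable_if_I) simp
    then have e2: "(\<lambda>x. if x - s \<in> {0<..t} then \<sigma>2 (x - s) else 0) \<in> borel_measurable lebesgue"
      by (rule borel_lebesgue_shift)
    have "(\<lambda>x. (if x \<in> {0..s} then \<sigma>1 x else 0) + (if x - s \<in> {0<..t} then \<sigma>2 (x - s) else 0))
          \<in> borel_measurable lebesgue"
      using e1 e2 by (rule borel_measurable_add)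
    moreover have "(\<lambda>x. (if x \<in> {0..s} then \<sigma>1 x else 0) + (if x - s \<in> {0<..t} then \<sigma>2 (x - s) else 0))
       = (\<lambda>x. if x \<in> {0..s+t} then \<sigma> x else 0)"
    proof
      fix x
      show "(if x \<in> {0..s} then \<sigma>1 x else 0) + (if x - s \<in> {0<..t} then \<sigma>2 (x - s) else 0)
            = (if x \<in> {0..s+t} then \<sigma> x else 0)"
        unfolding \<sigma>_def using s t by auto
    qed
    ultimately show "(\<lambda>x. if x \<in> {0..s+t} then \<sigma> x else 0) \<in> borel_measurable lebesgue" by simp
  qed
  have cont: "continuous_on {0..s+t} \<Phi>"
    unfolding \<Phi>_def
  proof (rule continuous_on_cases_le)
    show "continuous_on {x \<in> {0..s + t}. x \<le> s} \<Phi>1"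
      by (rule continuous_on_subset[OF c1]) auto
    have "continuous_on {x \<in> {0..s + t}. s \<le> x} (\<lambda>x. \<Phi>2 (x - s))"
      by (rule continuous_on_compose2[OF c2]) (auto intro!: continuous_intros)
    then show "continuous_on {x \<in> {0..s + t}. s \<le> x} (\<lambda>x. \<Phi>2 (x - s) ** \<Phi>1 s)"
      by (intro continuous_intros)
    show "continuous_on {0..s + t} (\<lambda>x. x)" by (rule continuous_on_id)
    show "\<And>x. x \<in> {0..s + t} \<Longrightarrow> x = s \<Longrightarrow> \<Phi>1 x = \<Phi>2 (x - s) ** \<Phi>1 s" using P20 by simp
  qed
  have integ: "((\<lambda>u. \<sigma> u ** \<Phi> u) has_integral (\<Phi> r - mat 1)) {0..r}" if r: "r \<in> {0..s+t}" for r
  proof (cases "r \<le> s")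
    case True
    have "((\<lambda>u. \<sigma>1 u ** \<Phi>1 u) has_integral (\<Phi>1 r - mat 1)) {0..r}" using i1 r True by simp
    moreover have "\<And>u. u \<in> {0..r} \<Longrightarrow> \<sigma>1 u ** \<Phi>1 u = \<sigma> u ** \<Phi> u"
      unfolding \<sigma>_def \<Phi>_def using True by auto
    ultimately have "((\<lambda>u. \<sigma> u ** \<Phi> u) has_integral (\<Phi>1 r - mat 1)) {0..r}"
      using has_integral_cong[of "{0..r}" "\<lambda>u. \<sigma>1 u ** \<Phi>1 u" "\<lambda>u. \<sigma> u ** \<Phi> u"] by simp
    moreover have "\<Phi> r = \<Phi>1 r" unfolding \<Phi>_def using True by simp
    ultimately show ?thesis by simp
  next
    case False
    have A1: "((\<lambda>u. \<sigma> u ** \<Phi> u) has_integral (\<Phi>1 s - mat 1)) {0..s}"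
    proof -
      have "((\<lambda>u. \<sigma>1 u ** \<Phi>1 u) has_integral (\<Phi>1 s - mat 1)) {0..s}" using i1 s by simp
      moreover have "\<And>u. u \<in> {0..s} \<Longrightarrow> \<sigma>1 u ** \<Phi>1 u = \<sigma> u ** \<Phi> u"
        unfolding \<sigma>_def \<Phi>_def by auto
      ultimately show ?thesis
        using has_integral_cong[of "{0..s}" "\<lambda>u. \<sigma>1 u ** \<Phi>1 u" "\<lambda>u. \<sigma> u ** \<Phi> u"] by simp
    qed
    have A2: "((\<lambda>u. \<sigma> u ** \<Phi> u) has_integral ((\<Phi>2 (r - s) - mat 1) ** \<Phi>1 s)) {s..r}"
    proof -
      have "((\<lambda>u. \<sigma>2 u ** \<Phi>2 u) has_integral (\<Phi>2 (r - s) - mat 1)) {0..r - s}"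
        using i2 r False by simp
      then have "((\<lambda>M. M ** \<Phi>1 s) \<circ> (\<lambda>u. \<sigma>2 u ** \<Phi>2 u) has_integral ((\<Phi>2 (r - s) - mat 1) ** \<Phi>1 s)) {0..r - s}"
        by (rule has_integral_linear[OF _ bounded_bilinear.bounded_linear_left[OF bounded_bilinear_mm]])
      then have "((\<lambda>u. (\<sigma>2 u ** \<Phi>2 u) ** \<Phi>1 s) has_integral ((\<Phi>2 (r - s) - mat 1) ** \<Phi>1 s)) {0..r - s}"
        by (simp add: o_def)
      then have "((\<lambda>u. (\<sigma>2 (u + - s) ** \<Phi>2 (u + - s)) ** \<Phi>1 s) has_integral ((\<Phi>2 (r - s) - mat 1) ** \<Phi>1 s)) {0 - - s..(r - s) - - s}"
        by (rule has_integral_shift_real_ivl)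
      then have sh: "((\<lambda>u. (\<sigma>2 (u - s) ** \<Phi>2 (u - s)) ** \<Phi>1 s) has_integral ((\<Phi>2 (r - s) - mat 1) ** \<Phi>1 s)) {s..r}"
        by simp
      have eqs: "\<And>u. u \<in> {s..r} - {s} \<Longrightarrow> (\<sigma>2 (u - s) ** \<Phi>2 (u - s)) ** \<Phi>1 s = \<sigma> u ** \<Phi> u"
        unfolding \<sigma>_def \<Phi>_def by (auto simp: matrix_mul_assoc)
      have "((\<lambda>u. \<sigma> u ** \<Phi> u) has_integral ((\<Phi>2 (r - s) - mat 1) ** \<Phi>1 s)) {s..r} \<longleftrightarrow>
            ((\<lambda>u. (\<sigma>2 (u - s) ** \<Phi>2 (u - s)) ** \<Phi>1 s) has_integral ((\<Phi>2 (r - s) - mat 1) ** \<Phi>1 s)) {s..r}"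
        by (rule has_integral_spike_finite_eq[of "{s}"]) (use eqs in simp_all)
      then show ?thesis using sh by simp
    qed
    have "((\<lambda>u. \<sigma> u ** \<Phi> u) has_integral ((\<Phi>1 s - mat 1) + (\<Phi>2 (r - s) - mat 1) ** \<Phi>1 s)) {0..r}"
      by (rule has_integral_combine[OF s _ A1 A2]) (use False in simp)
    moreover have "(\<Phi>1 s - mat 1) + (\<Phi>2 (r - s) - mat 1) ** \<Phi>1 s = \<Phi> r - mat 1"
      unfolding \<Phi>_def using False by (simp add: matrix_diff_rdistrib)
    ultimately show ?thesis by simp
  qed
  have "\<Phi> (s + t) \<in> cont_sg M (s + t)" unfolding cont_sg_def
    apply (rule CollectI)
    apply (rule exI[of _ \<sigma>])
    apply (rule exI[of _ \<Phi>])
    using meas Mall cont integ by simp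
  then show ?thesis using end_eq by simp
qed

lemma matpow_scale: "matpow (s *\<^sub>R A) k = (s ^ k) *\<^sub>R matpow (A::real^'n^'n) k"
proof (induction k)
  case 0 then show ?case by simp
next
  case (Suc k)
  have "matpow (s *\<^sub>R A) (Suc k) = (s *\<^sub>R A) ** ((s ^ k) *\<^sub>R matpow A k)" using Suc by simp
  also have "\<dots> = (s * s ^ k) *\<^sub>R (A ** matpow A k)"
    by (simp add: matrix_scalar_ac scalar_matrix_assoc[symmetric])
  finally show ?case by simp
qed

lemma norm_matpow: "norm (matpow (A::real^'n^'n) k) \<le> norm (mat 1 :: real^'n^'n) * norm A ^ k"
proof (induction k)
  case 0 then show ?case by simp
next
  case (Suc k)
  have "norm (matpow A (Suc k)) \<le> norm A * norm (matpow A k)" by (simp add: norm_mat_mult_le)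
  also have "\<dots> \<le> norm A * (norm (mat 1 :: real^'n^'n) * norm A ^ k)"
    using Suc by (intro mult_left_mono) auto
  finally show ?case by (simp add: algebra_simps)
qed

lemma mexp_scale: "mexp (s *\<^sub>R A) = (\<Sum>k. (s ^ k / fact k) *\<^sub>R matpow (A::real^'n^'n) k)"
  unfolding mexp_def matpow_scale by (simp add: divide_inverse mult.commute)

lemma mexp_zero: "mexp (0::real^'n^'n) = mat 1"
proof -
  have "mexp (0::real^'n^'n) = (\<Sum>k\<in>{0}. (1 / fact k) *\<^sub>R matpow (0::real^'n^'n) k)"
    unfolding mexp_def
  proof (rule suminf_finite)
    fix k :: nat assume "k \<notin> {0}"
    then obtain j where "k = Suc j" by (cases k) auto
    then show "(1 / fact k) *\<^sub>R matpow (0::real^'n^'n) k = 0" by simp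
  qed simp
  then show ?thesis by simp
qed

lemma mexp_cont_on: "continuous_on {-R..R} (\<lambda>s. mexp (s *\<^sub>R (A::real^'n^'n)))"
proof -
  define f where "f k s = (s ^ k / fact k) *\<^sub>R matpow A k" for k s
  define Mb where "Mb k = norm (mat 1 :: real^'n^'n) * ((\<bar>R\<bar> * norm A) ^ k / fact k)" for k
  have bnd: "norm (f k s) \<le> Mb k" if "s \<in> {-R..R}" for k s
  proof -
    have "\<bar>s\<bar> \<le> \<bar>R\<bar>" using that by auto
    then have sk: "\<bar>s\<bar> ^ k \<le> \<bar>R\<bar> ^ k" by (intro power_mono) auto
    have "norm (f k s) = (\<bar>s\<bar> ^ k / fact k) * norm (matpow A k)"
      unfolding f_def by (simp add: power_abs)
    also have "\<dots> \<le> (\<bar>R\<bar> ^ k / fact k) * (norm (mat 1 :: real^'n^'n) * norm A ^ k)"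
      using sk norm_matpow[of A k] by (intro mult_mono divide_right_mono) auto
    also have "\<dots> = Mb k" unfolding Mb_def by (simp add: power_mult_distrib)
    finally show ?thesis .
  qed
  have "summable (\<lambda>k. inverse (fact k) * (\<bar>R\<bar> * norm A) ^ k)" by (rule summable_exp)
  then have "summable Mb" unfolding Mb_def by (intro summable_mult) (simp add: divide_inverse mult.commute)
  then have ul: "uniform_limit {-R..R} (\<lambda>n s. \<Sum>i<n. f i s) (\<lambda>s. suminf (\<lambda>i. f i s)) sequentially"
    using bnd by (intro Weierstrass_m_test) auto
  have "continuous_on {-R..R} (\<lambda>s. suminf (\<lambda>i. f i s))"
    by (rule uniform_limit_theorem[OF _ ul]) (auto simp: f_def intro!: always_eventually continuous_intros)
  then show ?thesis unfolding f_def mexp_scale .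
qed

lemma mexp_cont: "continuous_on UNIV (\<lambda>s. mexp (s *\<^sub>R (A::real^'n^'n)))"
proof (rule continuous_at_imp_continuous_on, rule ballI)
  fix s0 :: real
  have "continuous_on {-(\<bar>s0\<bar>+1)<..<\<bar>s0\<bar>+1} (\<lambda>s. mexp (s *\<^sub>R A))"
    by (rule continuous_on_subset[OF mexp_cont_on[of "\<bar>s0\<bar>+1"]]) auto
  moreover have "s0 \<in> {-(\<bar>s0\<bar>+1)<..<\<bar>s0\<bar>+1}" by auto
  moreover have "open {-(\<bar>s0\<bar>+1)<..<\<bar>s0\<bar>+1}" by simp
  ultimately show "isCont (\<lambda>s. mexp (s *\<^sub>R A)) s0"
    using continuous_on_eq_continuous_at by blast
qed

lemma jp_cons: "jump_prod ((A,P)#ms) (t0#ts) t =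
   jump_prod ms ts t ** (mexp (((case ts of [] \<Rightarrow> t | s#_ \<Rightarrow> s) - t0) *\<^sub>R A) ** P)"
  by (simp add: Let_def)

lemma jp_nil2: "jump_prod ms [] t = mat 1"
  by (cases ms) auto

lemma jp_append:
  "length ms1 = length ts1 \<Longrightarrow> ts2 \<noteq> [] \<Longrightarrow>
   jump_prod (ms1 @ ms2) (ts1 @ ts2) t = jump_prod ms2 ts2 t ** jump_prod ms1 ts1 (hd ts2)"
proof (induction ms1 ts1 rule: list_induct2)
  case Nil then show ?case by simp
next
  case (Cons m ms1 t0 ts1)
  obtain A P where m: "m = (A, P)" by (cases m)
  have c: "(case ts1 @ ts2 of [] \<Rightarrow> t | s#_ \<Rightarrow> s) = (case ts1 of [] \<Rightarrow> hd ts2 | s#_ \<Rightarrow> s)"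
    using Cons.prems by (cases ts1; cases ts2) auto
  have "jump_prod ((m # ms1) @ ms2) ((t0 # ts1) @ ts2) t
      = jump_prod (ms1 @ ms2) (ts1 @ ts2) t ** (mexp (((case ts1 @ ts2 of [] \<Rightarrow> t | s#_ \<Rightarrow> s) - t0) *\<^sub>R A) ** P)"
    unfolding m by (simp only: append_Cons jp_cons)
  also have "\<dots> = (jump_prod ms2 ts2 t ** jump_prod ms1 ts1 (hd ts2)) **
        (mexp (((case ts1 of [] \<Rightarrow> hd ts2 | s#_ \<Rightarrow> s) - t0) *\<^sub>R A) ** P)"
    by (simp only: c Cons.IH[OF Cons.prems])
  also have "\<dots> = jump_prod ms2 ts2 t ** jump_prod (m # ms1) (t0 # ts1) (hd ts2)"
    unfolding m jp_cons by (simp add: matrix_mul_assoc)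
  finally show ?case .
qed

lemma jp_shift:
  "length ms = length ts \<Longrightarrow> jump_prod ms (map (\<lambda>x. x + c) ts) (t + c) = jump_prod ms ts t"
proof (induction ms ts rule: list_induct2)
  case Nil then show ?case by simp
next
  case (Cons m ms t0 ts)
  obtain A P where m: "m = (A, P)" by (cases m)
  have c: "(case map (\<lambda>x. x + c) ts of [] \<Rightarrow> t + c | s#_ \<Rightarrow> s) - (t0 + c) = (case ts of [] \<Rightarrow> t | s#_ \<Rightarrow> s) - t0"
    by (cases ts) auto
  show ?case unfolding m list.map(2) jp_cons c using Cons by simp
qed

lemma jp_cont:
  fixes ms :: "((real^'n^'n) \<times> (real^'n^'n)) list"
  shows "continuous_on UNIV (\<lambda>t. jump_prod ms ts t)"
proof (induction ms arbitrary: ts)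
  case Nil then show ?case by (simp add: continuous_on_const)
next
  case (Cons m ms)
  obtain A P where m: "m = (A, P)" by (cases m)
  show ?case
  proof (cases ts)
    case Nil then show ?thesis by (simp add: jp_nil2 continuous_on_const)
  next
    case (Cons t0 ts')
    show ?thesis
    proof (cases ts')
      case Nil
      have "continuous_on UNIV (\<lambda>t. mexp ((t - t0) *\<^sub>R A))"
        by (rule continuous_on_compose2[OF mexp_cont]) (auto intro!: continuous_intros)
      then have "continuous_on UNIV (\<lambda>t. mat 1 ** (mexp ((t - t0) *\<^sub>R A) ** P))"
        by (intro continuous_intros)
      then show ?thesis unfolding m \<open>ts = t0 # ts'\<close> jp_cons Nil jp_nil2 by simp
    next
      case (Cons s ss)
      have "continuous_on UNIV (\<lambda>t. jump_prod ms ts' t ** (mexp ((s - t0) *\<^sub>R A) ** P))"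
        using Cons.IH by (intro continuous_intros) auto
      then show ?thesis unfolding m \<open>ts = t0 # ts'\<close> jp_cons Cons by simp
    qed
  qed
qed

lemma sorted_hd_le: "sorted_wrt (<) (xs::real list) \<Longrightarrow> x \<in> set xs \<Longrightarrow> hd xs \<le> x"
  by (cases xs) auto

lemma sorted_le_last: "sorted_wrt (<) (xs::real list) \<Longrightarrow> x \<in> set xs \<Longrightarrow> x \<le> last xs"
proof (induction xs rule: rev_induct)
  case Nil then show ?case by simp
next
  case (snoc y ys) then show ?case by (auto simp: sorted_wrt_append)
qed

definition JN :: "((real^'n^'n) \<times> (real^'n^'n)) set \<Rightarrow> real \<Rightarrow> (real^'n^'n) set" where
  "JN M t = {jump_prod ms ts t | ms ts. ms \<noteq> [] \<and> length ts = length ms \<and> set ms \<subseteq> M \<and>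
      hd ts = 0 \<and> sorted_wrt (<) ts \<and> last ts < t}"

lemma JN_I: "ms \<noteq> [] \<Longrightarrow> length ts = length ms \<Longrightarrow> set ms \<subseteq> M \<Longrightarrow> hd ts = 0 \<Longrightarrow>
   sorted_wrt (<) ts \<Longrightarrow> last ts < t \<Longrightarrow> jump_prod ms ts t \<in> JN M t"
  unfolding JN_def by blast

lemma JN_sub: "JN M t \<subseteq> jump_sg M t"
  unfolding JN_def jump_sg_def by (force)

lemma JN_pos: assumes "X \<in> JN M t" shows "t > 0"
proof -
  obtain ms ts where h: "X = jump_prod ms ts t" "ms \<noteq> []" "length ts = length ms" "hd ts = 0" "sorted_wrt (<) ts" "last ts < t"
    using assms unfolding JN_def by blast
  have "ts \<noteq> []" using h(2,3) by auto
  then have "hd ts \<in> set ts" by simp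
  then have "hd ts \<le> last ts" by (rule sorted_le_last[OF h(5)])
  then show ?thesis using h(4,6) by simp
qed

lemma JN_mul:
  assumes X: "X \<in> JN M s" and Y: "Y \<in> JN M t"
  shows "Y ** X \<in> JN M (s + t)"
proof -
  obtain ms1 ts1 where 1: "X = jump_prod ms1 ts1 s" "ms1 \<noteq> []" "length ts1 = length ms1" "set ms1 \<subseteq> M"
      "hd ts1 = 0" "sorted_wrt (<) ts1" "last ts1 < s"
    using X unfolding JN_def by blast
  obtain ms2 ts2 where 2: "Y = jump_prod ms2 ts2 t" "ms2 \<noteq> []" "length ts2 = length ms2" "set ms2 \<subseteq> M"
      "hd ts2 = 0" "sorted_wrt (<) ts2" "last ts2 < t"
    using Y unfolding JN_def by blast
  define ts2' where "ts2' = map (\<lambda>x. x + s) ts2"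
  have ts1ne: "ts1 \<noteq> []" "ts2 \<noteq> []" using 1 2 by auto
  have hd2: "hd ts2' = s" unfolding ts2'_def using ts1ne 2(5) by (cases ts2) auto
  have val: "jump_prod (ms1 @ ms2) (ts1 @ ts2') (s + t) = Y ** X"
  proof -
    have "jump_prod (ms1 @ ms2) (ts1 @ ts2') (s + t) = jump_prod ms2 ts2' (s + t) ** jump_prod ms1 ts1 s"
      using jp_append[of ms1 ts1 ts2' ms2 "s + t"] 1(3) ts1ne hd2 unfolding ts2'_def by simp
    moreover have "jump_prod ms2 ts2' (t + s) = jump_prod ms2 ts2 t"
      unfolding ts2'_def by (rule jp_shift) (use 2 in simp)
    ultimately show ?thesis using 1(1) 2(1) by (simp add: add.commute)
  qed
  have sorted: "sorted_wrt (<) (ts1 @ ts2')"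
  proof -
    have "sorted_wrt (<) ts2'" unfolding ts2'_def sorted_wrt_map using 2(6)
      by (simp add: sorted_wrt_mono_rel[of _ "(<)"])
    moreover have "x < y" if xin: "x \<in> set ts1" and yin: "y \<in> set ts2'" for x y
    proof -
      have "x \<le> last ts1" using sorted_le_last[OF 1(6) xin] .
      moreover obtain z where "z \<in> set ts2" "y = z + s" using yin unfolding ts2'_def by auto
      moreover have "hd ts2 \<le> z" using sorted_hd_le[OF 2(6)] \<open>z \<in> set ts2\<close> by blast
      ultimately show ?thesis using 1(7) 2(5) by linarith
    qed
    ultimately show ?thesis using 1(6) by (simp add: sorted_wrt_append)
  qed
  have lst: "last (ts1 @ ts2') < s + t"
  proof -
    have "last (ts1 @ ts2') = last ts2'" using ts1ne unfolding ts2'_def by simp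
    also have "\<dots> = last ts2 + s" unfolding ts2'_def using ts1ne by (simp add: last_map)
    finally show ?thesis using 2(7) by simp
  qed
  have len2: "length ts2' = length ms2" unfolding ts2'_def using 2(3) by simp
  have "jump_prod (ms1 @ ms2) (ts1 @ ts2') (s + t) \<in> JN M (s + t)"
  proof (rule JN_I)
    show "ms1 @ ms2 \<noteq> []" using 1(2) by simp
    show "length (ts1 @ ts2') = length (ms1 @ ms2)" using 1(3) len2 by simp
    show "set (ms1 @ ms2) \<subseteq> M" using 1(4) 2(4) by simp
    show "hd (ts1 @ ts2') = 0" using ts1ne(1) 1(5) by simp
  qed (use sorted lst in simp_all)
  then show ?thesis using val by simp
qed

lemma jump_decomp:
  fixes M :: "((real^'n^'n) \<times> (real^'n^'n)) set"
  assumes X: "X \<in> jump_sg M t"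
  shows "X \<in> JN M t \<or> (\<exists>A P Z. (A, P) \<in> M \<and> (Z = mat 1 \<or> Z \<in> JN M t) \<and> X = P ** Z)"
proof -
  obtain ms ts where h: "X = jump_prod ms ts t" "ms \<noteq> []" "length ts = length ms" "set ms \<subseteq> M"
      "hd ts = 0" "sorted_wrt (<) ts" "last ts \<le> t"
    using X unfolding jump_sg_def by blast
  show ?thesis
  proof (cases "last ts < t")
    case True
    then have "X \<in> JN M t" unfolding h(1) using h by (intro JN_I) auto
    then show ?thesis by blast
  next
    case False
    then have lt: "last ts = t" using h(7) by simp
    obtain ms' m where ms: "ms = ms' @ [m]" using h(2) by (cases ms rule: rev_exhaust) auto
    have tsne: "ts \<noteq> []" using h(2,3) by auto
    define ts' where "ts' = butlast ts"
    have ts: "ts = ts' @ [t]" unfolding ts'_def using tsne lt by (metis append_butlast_last_id)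
    have len: "length ts' = length ms'" using h(3) unfolding ms ts by simp
    obtain A P where m: "m = (A, P)" by (cases m)
    have AP: "(A, P) \<in> M" using h(4) unfolding ms m by simp
    define Z where "Z = jump_prod ms' ts' t"
    have "X = jump_prod [m] [t] t ** jump_prod ms' ts' (hd [t])"
      unfolding h(1) ms ts by (rule jp_append[OF len[symmetric]]) simp
    also have "jump_prod [m] [t] t = P"
      unfolding m jp_cons by (simp add: mexp_zero)
    finally have XPZ: "X = P ** Z" unfolding Z_def by simp
    have "Z = mat 1 \<or> Z \<in> JN M t"
    proof (cases "ms' = []")
      case True
      then have "ts' = []" using len by simp
      then show ?thesis unfolding Z_def using True by simp
    next
      case False
      then have ts'ne: "ts' \<noteq> []" using len by auto
      have srt: "sorted_wrt (<) (ts' @ [t])" using h(6) unfolding ts .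
      have "Z \<in> JN M t" unfolding Z_def
      proof (rule JN_I)
        show "ms' \<noteq> []" using False .
        show "length ts' = length ms'" using len .
        show "set ms' \<subseteq> M" using h(4) unfolding ms by simp
        show "hd ts' = 0" using h(5) ts'ne unfolding ts by simp
        show "sorted_wrt (<) ts'" using srt by (simp add: sorted_wrt_append)
        have "last ts' \<in> set ts'" using ts'ne by simp
        then show "last ts' < t" using srt by (simp add: sorted_wrt_append)
      qed
      then show ?thesis by blast
    qed
    then show ?thesis using AP XPZ by blast
  qed
qed

lemma jump_perturb:
  fixes M :: "((real^'n^'n) \<times> (real^'n^'n)) set"
  assumes A: "A \<in> convex hull (jump_sg M T)" and eta: "\<eta> > 0"
  shows "\<exists>e>0. \<exists>B'\<in>convex hull (JN M (T + e)). dist B' A < \<eta>"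
proof -
  obtain S u where S: "finite S" "S \<subseteq> jump_sg M T" "\<forall>x\<in>S. 0 \<le> u x" "sum u S = 1"
    "(\<Sum>v\<in>S. u v *\<^sub>R v) = A"
    using A unfolding convex_hull_explicit by blast
  define Pr where "Pr v p \<longleftrightarrow> v = jump_prod (fst p) (snd p) T \<and> fst p \<noteq> [] \<and> length (snd p) = length (fst p)
     \<and> set (fst p) \<subseteq> M \<and> hd (snd p) = 0 \<and> sorted_wrt (<) (snd p) \<and> last (snd p) \<le> T"
    for v :: "real^'n^'n" and p :: "((real^'n^'n) \<times> (real^'n^'n)) list \<times> real list"
  have ex: "\<exists>p. Pr v p" if "v \<in> S" for v
  proof -
    have "v \<in> jump_sg M T" using that S(2) by blast
    then obtain ms ts where "v = jump_prod ms ts T" "ms \<noteq> []" "length ts = length ms" "set ms \<subseteq> M"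
      "hd ts = 0" "sorted_wrt (<) ts" "last ts \<le> T" unfolding jump_sg_def by blast
    then have "Pr v (ms, ts)" unfolding Pr_def by simp
    then show ?thesis by blast
  qed
  define r where "r v = (SOME p. Pr v p)" for v
  have rP: "Pr v (r v)" if "v \<in> S" for v unfolding r_def using ex[OF that] by (rule someI_ex)
  define g where "g v e = jump_prod (fst (r v)) (snd (r v)) (T + e)" for v e
  have g0: "g v 0 = v" if "v \<in> S" for v using rP[OF that] unfolding g_def Pr_def by simp
  have gJN: "g v e \<in> JN M (T + e)" if "v \<in> S" "e > 0" for v e
    using rP[OF that(1)] that(2) unfolding g_def Pr_def by (intro JN_I) auto
  have glim: "((\<lambda>e. g v e) \<longlongrightarrow> g v 0) (at_right 0)" for v
  proof -
    have "isCont (\<lambda>t. jump_prod (fst (r v)) (snd (r v)) t) (T + 0)"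
      using jp_cont continuous_on_eq_continuous_at open_UNIV by blast
    moreover have "((\<lambda>e. T + e) \<longlongrightarrow> T + 0) (at_right (0::real))"
      by (intro tendsto_intros)
    ultimately show ?thesis unfolding g_def by (rule isCont_tendsto_compose)
  qed
  have "((\<lambda>e. \<Sum>v\<in>S. u v *\<^sub>R g v e) \<longlongrightarrow> (\<Sum>v\<in>S. u v *\<^sub>R g v 0)) (at_right 0)"
    by (intro tendsto_sum tendsto_scaleR tendsto_const glim)
  moreover have "(\<Sum>v\<in>S. u v *\<^sub>R g v 0) = A" using S(5) g0 by simp
  ultimately have lim: "((\<lambda>e. \<Sum>v\<in>S. u v *\<^sub>R g v e) \<longlongrightarrow> A) (at_right 0)" by simp
  have "\<forall>\<^sub>F e in at_right 0. dist (\<Sum>v\<in>S. u v *\<^sub>R g v e) A < \<eta>"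
    by (rule tendstoD[OF lim eta])
  moreover have "\<forall>\<^sub>F e in at_right (0::real). 0 < e" by (rule eventually_at_right_less)
  ultimately have "\<forall>\<^sub>F e in at_right (0::real). dist (\<Sum>v\<in>S. u v *\<^sub>R g v e) A < \<eta> \<and> 0 < e"
    by (rule eventually_conj)
  moreover have "at_right (0::real) \<noteq> bot" using trivial_limit_at_right_real by simp
  ultimately obtain e where e: "dist (\<Sum>v\<in>S. u v *\<^sub>R g v e) A < \<eta>" "0 < e"
    using eventually_happens' by blast
  have "(\<Sum>v\<in>S. u v *\<^sub>R g v e) \<in> convex hull (JN M (T + e))"
    by (rule convex_sum[OF S(1) convex_convex_hull S(4)]) (use S(3) gJN e(2) in \<open>auto intro: hull_inc\<close>)
  then show ?thesis using e by blast
qed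

lemma cont_zero: "X \<in> cont_sg M 0 \<Longrightarrow> X = mat 1"
  unfolding cont_sg_def using cont_sg_I0[of 0] by auto

lemma cont_case:
  fixes K :: "(real^'n) set" and S :: "(real^'n^'n) set"
  assumes K: "proper_cone K" and S: "S = (\<Union>t\<in>{0..}. cont_sg M t)" and Spi: "S \<subseteq> pi_cone K"
    and irr: "irred_cont K (cont_sg M)" and jsr: "jsr_cont_is (cont_sg M) 1"
  shows "bounded S"
proof (rule ccontr)
  assume nb: "\<not> bounded S"
  define N where "N t = (if t \<ge> 0 then cont_sg M t else {})" for t :: real
  have Npi: "X \<in> pi_cone K" if XN: "X \<in> N t" for t X
  proof -
    have "t \<ge> 0" "X \<in> cont_sg M t" using XN unfolding N_def by (auto split: if_splits)
    then show ?thesis using Spi unfolding S by blast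
  qed
  have Nmul: "X ** Y \<in> N (s + t)" if XN: "X \<in> N s" and YN: "Y \<in> N t" for s t X Y
  proof -
    have st: "s \<ge> 0" "t \<ge> 0" "X \<in> cont_sg M s" "Y \<in> cont_sg M t"
      using XN YN unfolding N_def by (auto split: if_splits)
    then have "X ** Y \<in> cont_sg M (t + s)" by (intro cont_mul) auto
    then show ?thesis using st unfolding N_def by (simp add: add.commute)
  qed
  obtain T0 A where T0: "T0 > 0" "A \<in> convex hull (cont_sg M T0)" "K_irreducible K A"
    using irr unfolding irred_cont_def by blast
  have NT: "N T0 = cont_sg M T0" unfolding N_def using T0 by auto
  obtain c J \<eta> where cJ: "c > 0" "\<eta> > 0" "\<forall>B'. dist B' A < \<eta> \<longrightarrow>
     (\<forall>X\<in>pi_cone K. \<forall>Y\<in>pi_cone K. \<exists>j\<le>J. norm (X ** matpow B' j ** Y) \<ge> c * norm X * norm Y)"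
    using QI[OF K T0(3)] by blast
  have qi: "\<forall>X\<in>pi_cone K. \<forall>Y\<in>pi_cone K. \<exists>j\<le>J. norm (X ** matpow A j ** Y) \<ge> c * norm X * norm Y"
    using cJ by simp
  have unb: "\<exists>a>0. \<exists>X\<in>N a. norm X \<ge> R" for R
  proof -
    obtain X where X: "X \<in> S" "norm X \<ge> max R (norm (mat 1 :: real^'n^'n) + 1)"
      using unbounded_big[OF nb] by blast
    then obtain a where a: "a \<ge> 0" "X \<in> cont_sg M a" using S by auto
    have "a \<noteq> 0"
    proof
      assume "a = 0" then have "X = mat 1" using a cont_zero by blast
      then show False using X(2) by simp
    qed
    then show ?thesis using X a unfolding N_def by (intro exI[of _ a] conjI bexI[of _ X]) auto
  qed
  have gr: "\<exists>D>0. \<forall>R. \<exists>t\<ge>R. \<exists>Z\<in>N t. norm Z \<ge> 2 powr (t / D) / 2"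
    by (rule abstract_growth[OF K Npi Nmul _ _ cJ(1) qi unb, where T=T0]) (use NT T0 in auto)
  show False
    by (rule jsr_cont_contra[OF jsr _ gr]) (auto simp: N_def)
qed

lemma jump_case:
  fixes K :: "(real^'n) set" and S :: "(real^'n^'n) set"
  assumes K: "proper_cone K" and JM: "jump_modes M" and S: "S = (\<Union>t\<in>{0..}. jump_sg M t)"
    and Spi: "S \<subseteq> pi_cone K"
    and irr: "irred_cont K (jump_sg M)" and jsr: "jsr_cont_is (jump_sg M) 1"
  shows "bounded S"
proof (rule ccontr)
  assume nb: "\<not> bounded S"
  define N where "N = JN M"
  have Npi: "X \<in> pi_cone K" if XN: "X \<in> N t" for t X
  proof -
    have "t > 0" using JN_pos XN unfolding N_def by blast
    moreover have "X \<in> jump_sg M t" using JN_sub XN unfolding N_def by blast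
    ultimately have "X \<in> S" unfolding S by (intro UN_I[of t]) auto
    then show ?thesis using Spi by blast
  qed
  have Nmul: "X ** Y \<in> N (s + t)" if XN: "X \<in> N s" and YN: "Y \<in> N t" for s t X Y
  proof -
    have "X ** Y \<in> JN M (t + s)" using JN_mul YN XN unfolding N_def by blast
    then show ?thesis unfolding N_def by (simp add: add.commute)
  qed
  obtain T0 A where T0: "T0 > 0" "A \<in> convex hull (jump_sg M T0)" "K_irreducible K A"
    using irr unfolding irred_cont_def by blast
  obtain c J \<eta> where cJ: "c > 0" "\<eta> > 0" "\<forall>B'. dist B' A < \<eta> \<longrightarrow>
     (\<forall>X\<in>pi_cone K. \<forall>Y\<in>pi_cone K. \<exists>j\<le>J. norm (X ** matpow B' j ** Y) \<ge> c * norm X * norm Y)"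
    using QI[OF K T0(3)] by blast
  obtain e B' where eB: "e > 0" "B' \<in> convex hull (JN M (T0 + e))" "dist B' A < \<eta>"
    using jump_perturb[OF T0(2) cJ(2)] by blast
  have qi: "\<forall>X\<in>pi_cone K. \<forall>Y\<in>pi_cone K. \<exists>j\<le>J. norm (X ** matpow B' j ** Y) \<ge> c * norm X * norm Y"
    using cJ(3) eB(3) by blast
  obtain b where b: "\<And>x. x \<in> M \<Longrightarrow> norm x \<le> b"
    using JM unfolding jump_modes_def by (meson bounded_iff compact_imp_bounded)
  have unb: "\<exists>a>0. \<exists>X\<in>N a. norm X \<ge> R" for R
  proof (rule ccontr)
    assume "\<not> ?thesis"
    then have small: "\<And>a X. X \<in> JN M a \<Longrightarrow> norm X < R"
      unfolding N_def using JN_pos by (meson not_le)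
    define R' where "R' = max R (b * max R (norm (mat 1 :: real^'n^'n)))"
    have "norm X \<le> R'" if XS: "X \<in> S" for X
    proof -
      obtain t where t: "X \<in> jump_sg M t" using XS S by blast
      show ?thesis
      proof (cases "X \<in> JN M t")
        case True then show ?thesis using small[OF True] unfolding R'_def by simp
      next
        case False
        then obtain A' P Z where APZ: "(A', P) \<in> M" "Z = mat 1 \<or> Z \<in> JN M t" "X = P ** Z"
          using jump_decomp[OF t] by blast
        have nP: "norm P \<le> b" using b[OF APZ(1)] norm_snd_le[of P A'] by simp
        have nZ: "norm Z \<le> max R (norm (mat 1 :: real^'n^'n))"
        proof (cases "Z = mat 1")
          case True then show ?thesis by simp
        next
          case False
          then have "Z \<in> JN M t" using APZ(2) by blast
          then have "norm Z < R" by (rule small)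
          then show ?thesis by simp
        qed
        have "norm X \<le> norm P * norm Z" unfolding APZ(3) by (rule norm_mat_mult_le)
        also have "\<dots> \<le> b * max R (norm (mat 1 :: real^'n^'n))"
          using nP nZ by (intro mult_mono) (auto intro: order_trans[OF norm_ge_zero])
        finally show ?thesis unfolding R'_def by simp
      qed
    qed
    then have "bounded S" unfolding bounded_iff by blast
    then show False using nb by blast
  qed
  have gr: "\<exists>D>0. \<forall>R. \<exists>t\<ge>R. \<exists>Z\<in>N t. norm Z \<ge> 2 powr (t / D) / 2"
    by (rule abstract_growth[OF K Npi Nmul _ _ cJ(1) qi unb, where T="T0 + e"]) (use eB T0 N_def in auto)
  show False
    by (rule jsr_cont_contra[OF jsr _ gr]) (use JN_sub N_def in auto)
qed

theorem mainTheorem6: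
  fixes K :: "(real^'n) set" and S :: "(real^'n^'n) set"
  assumes "proper_cone K"
    and "(\<exists>M. compact M \<and> S = (\<Union>t. disc_sg M t) \<and> S \<subseteq> pi_cone K \<and>
              irred_disc K (disc_sg M) \<and> jsr_disc_is (disc_sg M) 1)
       \<or> (\<exists>M. compact M \<and> S = (\<Union>t\<in>{0..}. cont_sg M t) \<and> S \<subseteq> pi_cone K \<and>
              irred_cont K (cont_sg M) \<and> jsr_cont_is (cont_sg M) 1)
       \<or> (\<exists>M. jump_modes M \<and> S = (\<Union>t\<in>{0..}. jump_sg M t) \<and> S \<subseteq> pi_cone K \<and>
              irred_cont K (jump_sg M) \<and> jsr_cont_is (jump_sg M) 1)"
  shows "bounded S"
  using assms(2)
proof (elim disjE exE conjE)
  fix M assume "S = (\<Union>t. disc_sg M t)" "S \<subseteq> pi_cone K" "irred_disc K (disc_sg M)" "jsr_disc_is (disc_sg M) 1"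
  then show ?thesis by (rule disc_case[OF assms(1)])
next
  fix M assume "S = (\<Union>t\<in>{0..}. cont_sg M t)" "S \<subseteq> pi_cone K" "irred_cont K (cont_sg M)" "jsr_cont_is (cont_sg M) 1"
  then show ?thesis by (rule cont_case[OF assms(1)])
next
  fix M assume "jump_modes M" "S = (\<Union>t\<in>{0..}. jump_sg M t)" "S \<subseteq> pi_cone K" "irred_cont K (jump_sg M)" "jsr_cont_is (jump_sg M) 1"
  then show ?thesis by (rule jump_case[OF assms(1)])
qed

end
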